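(* Suppose Assumptions RA and ER hold. Then the identified set $\Theta_I(p_{df})$ for the proportion of defiers $p_{df}$ is $$\Theta_I(p_{df})=\Big[\max\Big\{\max_{s\in\{0,1\}}\sup_{A}\big\{\mathbb P(Y\in A,D=s\mid Z=1-s)-\mathbb P(Y\in A,D=s\mid Z=s)\big\},\,0\Big\},\ \min\{\mathbb E[D\mid Z=0],\mathbb E[1-D\mid Z=1]\}\Big]$$ (the supremum being over Borel sets $A\subseteq\mathcal Y$) if $$\max_{d\in\{0,1\}}\int_{\mathcal Y}\sup_{z\in\{0,1\}} f_{Y,D\mid Z}(y,d\mid z)\,d\mu(y)\le 1,$$ and $\Theta_I(p_{df})=\emptyset$ otherwise. In particular, the last displayed inequality is implied by Assumptions RA and ER.
   Context: Setup: $Z\in\{0,1\}$ is a binary instrument with $0<\mathbb P(Z=1)<1$, $D\in\{0,1\}$ a binary treatment, $Y$ a real outcome with support $\mathcal Y$. Latent variables: potential treatments $D_0,D_1\in\{0,1\}$ and potential outcomes $Y_{dz}$, $d,z\in\{0,1\}$ (outcome if treatment set to $d$ and instrument set to $z$). Observed data satisfy $D=D_1Z+D_0(1-Z)$ and $Y=(Y_{11}Z+Y_{10}(1-Z))D+(Y_{01}Z+Y_{00}(1-Z))(1-D)$. The type is $T=(D_0,D_1)$: always-takers $a=(1,1)$, never-takers $n=(0,0)$, compliers $c=(0,1)$, defiers $df=(1,0)$; $p_t=\mathbb P(T=t)$. Assumptions: RA (random assignment): $Z$ is independent of $(Y_{11},Y_{10},Y_{01},Y_{00},D_1,D_0)$.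 ER (exclusion restriction): $Y_{dz}=Y_{dz'}\equiv Y_d$ for all $d,z,z'$. MON (monotonicity): either $D_1\ge D_0$ (a.s.) or $D_0\ge D_1$ (a.s.). $f_{Y,D\mid Z}(y,d\mid z)\equiv f_{Y\mid D,Z}(y\mid d,z)\mathbb P(D=d\mid Z=z)$, where $f_{Y\mid D,Z}$ is the conditional density of $Y$ given $D=d,Z=z$ with respect to a known dominating measure $\mu$ on $\mathcal Y$. The identified set of a parameter under a set of assumptions is the set of values the parameter takes over all joint distributions of the latent variables and $Z$ that satisfy the assumptions and generate, through the model, the observed distribution of $(Y,D,Z)$; bounds are sharp if they coincide with the identified set. *)

theory Defs
  imports "HOL-Probability.Probability"
begin

text \<open>
  Observed data: a probability law on triples (Y, D, Z) :: real \<times> bool \<times> bool,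
  with True encoding the value 1 and False the value 0.
  Latent data: a probability law on
    (((Y11, Y10, Y01, Y00), (D0, D1)), Z)
  where Ydz is the potential outcome with treatment d and instrument z.
\<close>

type_synonym obs = "real \<times> bool \<times> bool"
type_synonym latent = "(real \<times> real \<times> real \<times> real) \<times> (bool \<times> bool)"
type_synonym omega = "latent \<times> bool"

definition obsM :: "obs measure" where
  "obsM = borel \<Otimes>\<^sub>M count_space UNIV \<Otimes>\<^sub>M count_space UNIV"

definition latentM :: "latent measure" where
  "latentM = (borel :: (real \<times> real \<times> real \<times> real) measure) \<Otimes>\<^sub>M count_space UNIV"

definition omegaM :: "omega measure" where
  "omegaM = latentM \<Otimes>\<^sub>M count_space UNIV"

definition Y11 :: "omega \<Rightarrow> real" where "Y11 w = fst (fst (fst w))"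
definition Y10 :: "omega \<Rightarrow> real" where "Y10 w = fst (snd (fst (fst w)))"
definition Y01 :: "omega \<Rightarrow> real" where "Y01 w = fst (snd (snd (fst (fst w))))"
definition Y00 :: "omega \<Rightarrow> real" where "Y00 w = snd (snd (snd (fst (fst w))))"
definition D0 :: "omega \<Rightarrow> bool" where "D0 w = fst (snd (fst w))"
definition D1 :: "omega \<Rightarrow> bool" where "D1 w = snd (snd (fst w))"
definition Zv :: "omega \<Rightarrow> bool" where "Zv w = snd w"

definition Dobs :: "omega \<Rightarrow> bool" where
  "Dobs w = (if Zv w then D1 w else D0 w)"

definition Yobs :: "omega \<Rightarrow> real" where
  "Yobs w = (if Dobs w then (if Zv w then Y11 w else Y10 w)
                       else (if Zv w then Y01 w else Y00 w))"

definition obs_map :: "omega \<Rightarrow> obs" where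
  "obs_map w = (Yobs w, Dobs w, Zv w)"

definition RA :: "omega measure \<Rightarrow> bool" where
  "RA L \<longleftrightarrow> prob_space.indep_set L
      {fst -` A \<inter> space L | A. A \<in> sets latentM}
      {Zv -` B \<inter> space L | B. B \<in> sets (count_space (UNIV :: bool set))}"

definition ER :: "omega measure \<Rightarrow> bool" where
  "ER L \<longleftrightarrow> (AE w in L. Y11 w = Y10 w \<and> Y01 w = Y00 w)"

definition p_df :: "omega measure \<Rightarrow> real" where
  "p_df L = measure L {w \<in> space L. D0 w \<and> \<not> D1 w}"

definition identified_set_pdf :: "obs measure \<Rightarrow> real set" where
  "identified_set_pdf P =
     {p_df L | L. prob_space L \<and> sets L = sets omegaM \<and> RA L \<and> ER L
                  \<and> distr L obsM obs_map = P}"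

definition cprob :: "obs measure \<Rightarrow> real set \<Rightarrow> bool \<Rightarrow> bool \<Rightarrow> real" where
  "cprob P A d z =
     measure P {(y, d', z'). y \<in> A \<and> d' = d \<and> z' = z} / measure P {(y, d', z'). z' = z}"

definition cprobD :: "obs measure \<Rightarrow> bool \<Rightarrow> bool \<Rightarrow> real" where
  "cprobD P d z = cprob P UNIV d z"

definition lower_pdf :: "obs measure \<Rightarrow> real" where
  "lower_pdf P = max (Max ((\<lambda>s. SUP A \<in> sets (borel :: real measure).
                              cprob P A s (\<not> s) - cprob P A s s) ` UNIV)) 0"

definition upper_pdf :: "obs measure \<Rightarrow> real" where
  "upper_pdf P = min (cprobD P True False) (cprobD P False True)"

end

theory Submission
  imports Defs
begin

lemma latentM_eq: "latentM = (borel \<Otimes>\<^sub>M borel \<Otimes>\<^sub>M borel \<Otimes>\<^sub>M borel) \<Otimes>\<^sub>M count_space UNIV"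
  unfolding latentM_def by (simp add: borel_prod)
lemma omegaM_eq: "omegaM = ((borel \<Otimes>\<^sub>M borel \<Otimes>\<^sub>M borel \<Otimes>\<^sub>M borel) \<Otimes>\<^sub>M count_space UNIV) \<Otimes>\<^sub>M count_space UNIV"
  unfolding omegaM_def latentM_eq ..
lemma meas_snd_fst_om: "(\<lambda>w::omega. snd (fst w)) \<in> measurable omegaM (count_space UNIV)"
  unfolding omegaM_eq by (intro measurable_compose[OF measurable_fst measurable_snd])
lemma meas_D0[measurable]: "D0 \<in> measurable omegaM (count_space UNIV)"
  unfolding D0_def by (rule measurable_compose[OF meas_snd_fst_om]) simp
lemma meas_D1[measurable]: "D1 \<in> measurable omegaM (count_space UNIV)"
  unfolding D1_def by (rule measurable_compose[OF meas_snd_fst_om]) simp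
lemma meas_Zv[measurable]: "Zv \<in> measurable omegaM (count_space UNIV)"
  unfolding omegaM_eq Zv_def by (rule measurable_snd)
lemma meas_Y[measurable]: "Y11 \<in> borel_measurable omegaM" "Y10 \<in> borel_measurable omegaM"
  "Y01 \<in> borel_measurable omegaM" "Y00 \<in> borel_measurable omegaM"
  unfolding omegaM_eq Y11_def Y10_def Y01_def Y00_def
  by (intro measurable_compose[OF measurable_fst] measurable_compose[OF measurable_snd] measurable_fst measurable_snd)+
lemma meas_Dobs[measurable]: "Dobs \<in> measurable omegaM (count_space UNIV)"
  unfolding Dobs_def by measurable
lemma meas_Yobs[measurable]: "Yobs \<in> borel_measurable omegaM"
  unfolding Yobs_def by measurable
lemma obs_map_meas: "obs_map \<in> measurable omegaM obsM"
  unfolding obsM_def obs_map_def by measurable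

lemma obsM_eq: "obsM = borel \<Otimes>\<^sub>M count_space UNIV"
  unfolding obsM_def by (simp add: pair_measure_countable)

lemma space_omegaM: "space omegaM = UNIV"
  unfolding omegaM_eq by (simp add: space_pair_measure)
lemma space_latentM: "space latentM = UNIV"
  unfolding latentM_eq by (simp add: space_pair_measure)
lemma space_obsM: "space obsM = UNIV"
  unfolding obsM_def by (simp add: space_pair_measure)

definition lD :: "bool \<Rightarrow> latent \<Rightarrow> bool" where "lD z l = (if z then snd (snd l) else fst (snd l))"
definition lY :: "bool \<Rightarrow> latent \<Rightarrow> real" where "lY d l = (if d then fst (fst l) else fst (snd (snd (fst l))))"
definition SS :: "bool \<Rightarrow> bool \<Rightarrow> real set \<Rightarrow> latent set" where
  "SS d z A = {l. lD z l = d \<and> lY d l \<in> A}"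
definition Def :: "latent set" where "Def = {l. fst (snd l) \<and> \<not> snd (snd l)}"
definition slice :: "real set \<Rightarrow> bool \<Rightarrow> bool \<Rightarrow> obs set" where
  "slice A d z = {(y, d', z'). y \<in> A \<and> d' = d \<and> z' = z}"
definition Zset :: "bool \<Rightarrow> obs set" where "Zset z = {(y, d', z'). z' = z}"

lemma meas_snd_lat: "(\<lambda>l::latent. snd l) \<in> measurable latentM (count_space UNIV)"
  unfolding latentM_eq by (rule measurable_snd)
lemma meas_lD[measurable]: "lD z \<in> measurable latentM (count_space UNIV)"
  unfolding lD_def by (rule measurable_compose[OF meas_snd_lat]) simp
lemma meas_lY[measurable]: "lY d \<in> borel_measurable latentM"
  unfolding lY_def latentM_eq
  by (cases d; simp; intro measurable_compose[OF measurable_fst] measurable_compose[OF measurable_snd] measurable_fst measurable_snd)+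

lemma SS_sets: "A \<in> sets borel \<Longrightarrow> SS d z A \<in> sets latentM"
proof -
  assume A: "A \<in> sets borel"
  have "SS d z A = {l \<in> space latentM. lD z l = d \<and> lY d l \<in> A}" by (simp add: SS_def space_latentM)
  also have "\<dots> \<in> sets latentM" using A by measurable
  finally show ?thesis .
qed
lemma Def_sets: "Def \<in> sets latentM"
proof -
  have "Def = {l \<in> space latentM. lD False l \<and> \<not> lD True l}" by (auto simp: Def_def space_latentM lD_def)
  also have "\<dots> \<in> sets latentM" by measurable
  finally show ?thesis .
qed
lemma slice_sets: "A \<in> sets borel \<Longrightarrow> slice A d z \<in> sets obsM"
proof -
  assume A: "A \<in> sets borel"
  have "slice A d z = A \<times> {(d, z)}" by (auto simp: slice_def)
  then show ?thesis unfolding obsM_eq using A by (auto intro!: pair_measureI)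
qed
lemma Zset_sets: "Zset z \<in> sets obsM"
proof -
  have "Zset z = UNIV \<times> (UNIV \<times> {z})" by (auto simp: Zset_def)
  then show ?thesis unfolding obsM_eq by (auto intro!: pair_measureI)
qed

lemma key_nec:
  assumes L: "prob_space L" "sets L = sets omegaM" "RA L" "ER L" "distr L obsM obs_map = P"
    and Zpos: "0 < measure P (Zset z)" and A: "A \<in> sets borel"
  shows "cprob P A d z = measure L (fst -` SS d z A)"
proof -
  interpret prob_space L by fact
  have spL: "space L = UNIV" using sets_eq_imp_space_eq[OF L(2)] space_omegaM by simp
  have om: "obs_map \<in> measurable L obsM" using obs_map_meas measurable_cong_sets[OF L(2)] by blast
  have fstm: "fst \<in> measurable L latentM" using measurable_cong_sets[OF L(2) refl] unfolding omegaM_def by auto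
  have zm: "Zv \<in> measurable L (count_space UNIV)" using meas_Zv measurable_cong_sets[OF L(2)] by blast
  have m1: "measure P (slice A d z) = prob (obs_map -` slice A d z)"
    using measure_distr[OF om slice_sets[OF A]] L(5) spL by simp
  have m2: "measure P (Zset z) = prob (Zv -` {z})"
  proof -
    have "measure P (Zset z) = prob (obs_map -` Zset z)"
      using measure_distr[OF om Zset_sets] L(5) spL by simp
    moreover have "obs_map -` Zset z = Zv -` {z}" by (auto simp: obs_map_def Zset_def)
    ultimately show ?thesis by simp
  qed
  have ae: "AE w in L. w \<in> obs_map -` slice A d z \<longleftrightarrow> w \<in> fst -` SS d z A \<inter> Zv -` {z}"
  proof -
    have "AE w in L. Y11 w = Y10 w \<and> Y01 w = Y00 w" using L(4) by (simp add: ER_def)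
    then show ?thesis
      by (rule eventually_mono) (auto simp: obs_map_def slice_def SS_def Yobs_def Dobs_def lD_def lY_def
          Y11_def Y10_def Y01_def Y00_def D0_def D1_def Zv_def split: if_splits)
  qed
  have s1: "obs_map -` slice A d z \<in> sets L"
    using measurable_sets[OF om slice_sets[OF A]] spL by simp
  have s2: "fst -` SS d z A \<in> sets L"
    using measurable_sets[OF fstm SS_sets[OF A]] spL by simp
  have s3: "Zv -` {z} \<in> sets L"
    using measurable_sets[OF zm, of "{z}"] spL by simp
  have m3: "prob (obs_map -` slice A d z) = prob (fst -` SS d z A \<inter> Zv -` {z})"
    by (rule measure_eq_AE[OF ae s1]) (use s2 s3 in auto)
  have ind: "prob (fst -` SS d z A \<inter> Zv -` {z}) = prob (fst -` SS d z A) * prob (Zv -` {z})"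
  proof -
    have "indep_set {fst -` A \<inter> space L | A. A \<in> sets latentM}
      {Zv -` B \<inter> space L | B. B \<in> sets (count_space (UNIV :: bool set))}"
      using L(3) by (simp add: RA_def)
    moreover have "fst -` SS d z A \<in> {fst -` A \<inter> space L | A. A \<in> sets latentM}"
      using SS_sets[OF A] spL by auto
    moreover have "Zv -` {z} \<in> {Zv -` B \<inter> space L | B. B \<in> sets (count_space (UNIV :: bool set))}"
      using spL by auto
    ultimately show ?thesis by (rule indep_setD)
  qed
  have "cprob P A d z = measure P (slice A d z) / measure P (Zset z)"
    by (simp add: cprob_def slice_def Zset_def)
  also have "\<dots> = prob (fst -` SS d z A)" using m1 m2 m3 ind Zpos by simp
  finally show ?thesis .
qed


lemma nec_bounds:
  assumes L: "prob_space L" "sets L = sets omegaM" "RA L" "ER L" "distr L obsM obs_map = P"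
    and Zpos: "\<And>z. 0 < measure P (Zset z)"
  shows "\<And>A. A \<in> sets borel \<Longrightarrow> cprob P A d (\<not> d) - cprob P A d d \<le> p_df L"
    and "p_df L \<le> cprob P UNIV True False" and "p_df L \<le> cprob P UNIV False True"
    and "0 \<le> p_df L"
proof -
  interpret prob_space L by fact
  have spL: "space L = UNIV" using sets_eq_imp_space_eq[OF L(2)] space_omegaM by simp
  have fstm: "fst \<in> measurable L latentM" using measurable_cong_sets[OF L(2) refl] unfolding omegaM_def by auto
  have sv: "\<And>S. S \<in> sets latentM \<Longrightarrow> fst -` S \<in> sets L"
    using measurable_sets[OF fstm] spL by (metis inf_top.right_neutral)
  have pdf: "p_df L = prob (fst -` Def)"
    unfolding p_df_def Def_def D0_def D1_def spL by (simp add: vimage_def)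
  have KN: "\<And>A d z. A \<in> sets borel \<Longrightarrow> cprob P A d z = prob (fst -` SS d z A)"
    using key_nec[OF L Zpos] by blast
  show "0 \<le> p_df L" unfolding pdf by simp
  show "p_df L \<le> cprob P UNIV True False"
  proof -
    have "Def \<subseteq> SS True False UNIV" by (auto simp: Def_def SS_def lD_def)
    then have "prob (fst -` Def) \<le> prob (fst -` SS True False UNIV)"
      by (intro finite_measure_mono sv SS_sets) auto
    then show ?thesis using KN[of UNIV True False] pdf by simp
  qed
  show "p_df L \<le> cprob P UNIV False True"
  proof -
    have "Def \<subseteq> SS False True UNIV" by (auto simp: Def_def SS_def lD_def)
    then have "prob (fst -` Def) \<le> prob (fst -` SS False True UNIV)"
      by (intro finite_measure_mono sv SS_sets) auto
    then show ?thesis using KN[of UNIV False True] pdf by simp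
  qed
  fix A :: "real set" assume A: "A \<in> sets borel"
  have sub: "SS d (\<not> d) A \<subseteq> SS d d A \<union> Def"
    by (cases d) (auto simp: Def_def SS_def lD_def)
  have "prob (fst -` SS d (\<not> d) A) \<le> prob (fst -` SS d d A \<union> fst -` Def)"
    using sub by (intro finite_measure_mono) (auto intro!: sets.Un sv SS_sets A Def_sets)
  also have "\<dots> \<le> prob (fst -` SS d d A) + prob (fst -` Def)"
    by (intro measure_Un_le sv SS_sets A Def_sets)
  finally show "cprob P A d (\<not> d) - cprob P A d d \<le> p_df L"
    using KN[OF A] pdf by simp
qed

locale pdset =
  fixes P :: "obs measure" and \<mu> :: "real measure"
    and f :: "real \<Rightarrow> bool \<Rightarrow> bool \<Rightarrow> real"
  assumes P_prob: "prob_space P"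
    and P_sets: "sets P = sets obsM"
    and Z_nondeg: "0 < measure P {(y, d, z). z}" "measure P {(y, d, z). z} < 1"
    and mu_sets: "sets \<mu> = sets borel"
    and mu_sf: "sigma_finite_measure \<mu>"
    and f_meas: "\<And>d z. (\<lambda>y. f y d z) \<in> borel_measurable borel"
    and f_nonneg: "\<And>y d z. 0 \<le> f y d z"
    and f_density: "\<And>A d z. A \<in> sets borel \<Longrightarrow>
          ennreal (cprob P A d z) = (\<integral>\<^sup>+ y \<in> A. ennreal (f y d z) \<partial>\<mu>)"
begin

lemma spP: "space P = UNIV" using sets_eq_imp_space_eq[OF P_sets] space_obsM by simp

lemma sliceP: "A \<in> sets borel \<Longrightarrow> slice A d z \<in> sets P" using slice_sets P_sets by simp
lemma ZsetP: "Zset z \<in> sets P" using Zset_sets P_sets by simp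

lemma Zpos: "0 < measure P (Zset z)"
proof (cases z)
  case True
  have "Zset True = {(y, d, z). z}" by (auto simp: Zset_def)
  then show ?thesis using True Z_nondeg by simp
next
  case False
  interpret prob_space P by (rule P_prob)
  have e: "Zset False = space P - Zset True" by (auto simp: Zset_def spP)
  have "Zset True = {(y, d, z). z}" by (auto simp: Zset_def)
  then have "prob (Zset False) = 1 - prob {(y, d, z). z}" unfolding e
    using prob_compl[OF ZsetP[of True]] by simp
  then show ?thesis using False Z_nondeg by simp
qed

lemma cprob_eq: "cprob P A d z = measure P (slice A d z) / measure P (Zset z)"
  by (simp add: cprob_def slice_def Zset_def)

lemma c_nonneg: "0 \<le> cprob P A d z" unfolding cprob_eq by simp

lemma c_le1: "A \<in> sets borel \<Longrightarrow> cprob P A d z \<le> 1"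
proof -
  assume A: "A \<in> sets borel"
  interpret prob_space P by (rule P_prob)
  have "measure P (slice A d z) \<le> measure P (Zset z)"
    by (rule finite_measure_mono[OF _ ZsetP]) (auto simp: slice_def Zset_def)
  then show ?thesis unfolding cprob_eq using Zpos[of z] by simp
qed

lemma c_split: "B \<in> sets borel \<Longrightarrow> cprob P UNIV d z = cprob P B d z + cprob P (- B) d z"
proof -
  assume B: "B \<in> sets borel"
  interpret prob_space P by (rule P_prob)
  have cB: "- B \<in> sets borel" using B by (metis borel_comp)
  have "slice UNIV d z = slice B d z \<union> slice (- B) d z" by (auto simp: slice_def)
  moreover have "slice B d z \<inter> slice (- B) d z = {}" by (auto simp: slice_def)
  ultimately have "measure P (slice UNIV d z) = measure P (slice B d z) + measure P (slice (- B) d z)"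
    using finite_measure_Union[OF sliceP[OF B] sliceP[OF cB]] by simp
  then show ?thesis unfolding cprob_eq by (simp add: add_divide_distrib)
qed

lemma c_sum: "cprob P UNIV True z + cprob P UNIV False z = 1"
proof -
  interpret prob_space P by (rule P_prob)
  have "Zset z = slice UNIV True z \<union> slice UNIV False z" by (auto simp: slice_def Zset_def)
  moreover have "slice UNIV True z \<inter> slice UNIV False z = {}" by (auto simp: slice_def)
  ultimately have "measure P (Zset z) = measure P (slice UNIV True z) + measure P (slice UNIV False z)"
    using finite_measure_Union[OF sliceP sliceP] by simp
  then show ?thesis unfolding cprob_eq using Zpos[of z] by (simp add: add_divide_distrib[symmetric])
qed

definition trm :: "bool \<Rightarrow> real" where
  "trm s = (SUP A \<in> sets (borel :: real measure). cprob P A s (\<not> s) - cprob P A s s)"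

lemma trm_ge: assumes "B \<in> sets borel" shows "cprob P B d (\<not> d) - cprob P B d d \<le> trm d"
  unfolding trm_def
proof (rule cSUP_upper[OF assms])
  show "bdd_above ((\<lambda>A. cprob P A d (\<not> d) - cprob P A d d) ` sets borel)"
  proof (rule bdd_aboveI[where M=1])
    fix x assume "x \<in> (\<lambda>A. cprob P A d (\<not> d) - cprob P A d d) ` sets borel"
    then obtain A where A: "A \<in> sets borel" "x = cprob P A d (\<not> d) - cprob P A d d" by blast
    show "x \<le> 1" using c_le1[OF A(1), of d "\<not> d"] c_nonneg[of A d d] A(2) by linarith
  qed
qed

lemma lower_eq: "lower_pdf P = max (Max (trm ` UNIV)) 0"
  unfolding lower_pdf_def by (simp add: trm_def)

lemma trm_le_lower: "trm d \<le> lower_pdf P"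
  unfolding lower_eq by (rule max.coboundedI1, rule Max_ge) auto

lemma lower_le: "(\<And>A. A \<in> sets borel \<Longrightarrow> cprob P A True False - cprob P A True True \<le> p)
   \<Longrightarrow> (\<And>A. A \<in> sets borel \<Longrightarrow> cprob P A False True - cprob P A False False \<le> p) \<Longrightarrow> 0 \<le> p
   \<Longrightarrow> lower_pdf P \<le> p"
  unfolding lower_pdf_def
  apply (rule max.boundedI)
   apply (subst Max_le_iff)
     apply simp_all
  apply (intro allI cSUP_least)
  subgoal by blast
  subgoal for s x by (cases s) auto
  done

lemma upper_le: "upper_pdf P \<le> cprob P UNIV (\<not> d) d"
  unfolding upper_pdf_def cprobD_def by (cases d) auto

end

context pdset begin

definition BB :: "bool \<Rightarrow> real set" where "BB d = {y. f y d d < f y d (\<not> d)}"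

lemma BB_sets: "BB d \<in> sets borel"
proof -
  have "BB d = {y \<in> space borel. f y d d < f y d (\<not> d)}" by (simp add: BB_def)
  also have "\<dots> \<in> sets borel" by (intro borel_measurable_less f_meas)
  finally show ?thesis .
qed

lemma fmu: "(\<lambda>y. f y d z) \<in> borel_measurable \<mu>"
  using f_meas measurable_cong_sets[OF mu_sets refl] by blast

lemma int_ind: "A \<in> sets borel \<Longrightarrow> (\<integral>\<^sup>+ y. ennreal (f y d z) * indicator A y \<partial>\<mu>) = ennreal (cprob P A d z)"
  using f_density by simp

lemma mu_setsI: "A \<in> sets borel \<Longrightarrow> A \<in> sets \<mu>" using mu_sets by simp

lemma fmu_ind: assumes A: "A \<in> sets borel"
  shows "(\<lambda>y. ennreal (f y d z) * indicator A y) \<in> borel_measurable \<mu>"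
proof -
  have [measurable]: "(\<lambda>y. f y d z) \<in> borel_measurable \<mu>" by (rule fmu)
  have [measurable]: "A \<in> sets \<mu>" using mu_setsI[OF A] .
  show ?thesis by measurable
qed

lemma max_int: "(\<integral>\<^sup>+ y. ennreal (max (f y d False) (f y d True)) \<partial>\<mu>)
    = ennreal (cprob P (BB d) d (\<not> d) + cprob P (- BB d) d d)"
proof -
  have cB: "- BB d \<in> sets borel" using BB_sets by (metis borel_comp)
  have pw: "\<And>y. ennreal (max (f y d False) (f y d True)) =
      ennreal (f y d (\<not> d)) * indicator (BB d) y + ennreal (f y d d) * indicator (- BB d) y"
  proof -
    fix y show "ennreal (max (f y d False) (f y d True)) =
      ennreal (f y d (\<not> d)) * indicator (BB d) y + ennreal (f y d d) * indicator (- BB d) y"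
    proof (cases "y \<in> BB d")
      case True
      then have "f y d d < f y d (\<not> d)" by (simp add: BB_def)
      then have "max (f y d False) (f y d True) = f y d (\<not> d)" by (cases d) auto
      then show ?thesis using True by simp
    next
      case False
      then have "\<not> f y d d < f y d (\<not> d)" by (simp add: BB_def)
      then have "max (f y d False) (f y d True) = f y d d" by (cases d) auto
      then show ?thesis using False by simp
    qed
  qed
  have "(\<integral>\<^sup>+ y. ennreal (max (f y d False) (f y d True)) \<partial>\<mu>) =
     (\<integral>\<^sup>+ y. ennreal (f y d (\<not> d)) * indicator (BB d) y + ennreal (f y d d) * indicator (- BB d) y \<partial>\<mu>)"
    by (simp add: pw)
  also have "\<dots> = (\<integral>\<^sup>+ y. ennreal (f y d (\<not> d)) * indicator (BB d) y \<partial>\<mu>) + (\<integral>\<^sup>+ y. ennreal (f y d d) * indicator (- BB d) y \<partial>\<mu>)"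
    by (rule nn_integral_add) (intro fmu_ind BB_sets cB)+
  also have "\<dots> = ennreal (cprob P (BB d) d (\<not> d) + cprob P (- BB d) d d)"
    using int_ind[OF BB_sets] int_ind[OF cB] c_nonneg by simp
  finally show ?thesis .
qed

lemma min_int: "(\<integral>\<^sup>+ y. ennreal (min (f y d d) (f y d (\<not> d))) \<partial>\<mu>)
    = ennreal (cprob P (BB d) d d + cprob P (- BB d) d (\<not> d))"
proof -
  have cB: "- BB d \<in> sets borel" using BB_sets by (metis borel_comp)
  have pw: "\<And>y. ennreal (min (f y d d) (f y d (\<not> d))) =
      ennreal (f y d d) * indicator (BB d) y + ennreal (f y d (\<not> d)) * indicator (- BB d) y"
  proof -
    fix y show "ennreal (min (f y d d) (f y d (\<not> d))) =
      ennreal (f y d d) * indicator (BB d) y + ennreal (f y d (\<not> d)) * indicator (- BB d) y"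
    proof (cases "y \<in> BB d")
      case True
      then have "f y d d < f y d (\<not> d)" by (simp add: BB_def)
      then have "min (f y d d) (f y d (\<not> d)) = f y d d" by simp
      then show ?thesis using True by simp
    next
      case False
      then have "\<not> f y d d < f y d (\<not> d)" by (simp add: BB_def)
      then have "min (f y d d) (f y d (\<not> d)) = f y d (\<not> d)" by simp
      then show ?thesis using False by simp
    qed
  qed
  have "(\<integral>\<^sup>+ y. ennreal (min (f y d d) (f y d (\<not> d))) \<partial>\<mu>) =
     (\<integral>\<^sup>+ y. ennreal (f y d d) * indicator (BB d) y + ennreal (f y d (\<not> d)) * indicator (- BB d) y \<partial>\<mu>)"
    by (simp add: pw)
  also have "\<dots> = (\<integral>\<^sup>+ y. ennreal (f y d d) * indicator (BB d) y \<partial>\<mu>) + (\<integral>\<^sup>+ y. ennreal (f y d (\<not> d)) * indicator (- BB d) y \<partial>\<mu>)"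
    by (rule nn_integral_add) (intro fmu_ind BB_sets cB)+
  also have "\<dots> = ennreal (cprob P (BB d) d d + cprob P (- BB d) d (\<not> d))"
    using int_ind[OF BB_sets] int_ind[OF cB] c_nonneg by simp
  finally show ?thesis .
qed

lemma c_sum': "cprob P UNIV (\<not> d) d = 1 - cprob P UNIV d d"
  using c_sum[of d] by (cases d) auto

lemma cond_fail:
  assumes "\<not> (\<integral>\<^sup>+ y. ennreal (max (f y d False) (f y d True)) \<partial>\<mu>) \<le> 1"
  shows "upper_pdf P < lower_pdf P"
proof -
  have "1 < cprob P (BB d) d (\<not> d) + cprob P (- BB d) d d"
    using assms unfolding max_int by (metis ennreal_le_1 not_le_imp_less)
  moreover have "cprob P UNIV d d = cprob P (BB d) d d + cprob P (- BB d) d d" by (rule c_split[OF BB_sets])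
  ultimately have "cprob P UNIV (\<not> d) d < cprob P (BB d) d (\<not> d) - cprob P (BB d) d d"
    using c_sum'[of d] by linarith
  then show ?thesis using upper_le[of d] trm_ge[OF BB_sets[of d], where d=d] trm_le_lower[of d] by linarith
qed

lemma min_ge:
  assumes "lower_pdf P \<le> p"
  shows "ennreal (cprob P UNIV d (\<not> d) - p) \<le> (\<integral>\<^sup>+ y. ennreal (min (f y d d) (f y d (\<not> d))) \<partial>\<mu>)"
proof -
  have "cprob P UNIV d (\<not> d) = cprob P (BB d) d (\<not> d) + cprob P (- BB d) d (\<not> d)" by (rule c_split[OF BB_sets])
  then have "cprob P UNIV d (\<not> d) - p \<le> cprob P (BB d) d d + cprob P (- BB d) d (\<not> d)"
    using trm_ge[OF BB_sets[of d], where d=d] trm_le_lower[of d] assms by linarith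
  then show ?thesis unfolding min_int by (rule ennreal_leI)
qed

end

definition qinv :: "ennreal \<Rightarrow> ennreal" where "qinv m = (if m = 0 then 0 else 1 / m)"

lemma qinv_mult: "m \<noteq> \<infinity> \<Longrightarrow> m \<noteq> 0 \<Longrightarrow> qinv m * m = 1"
  unfolding qinv_def by (simp add: ennreal_divide_times top.not_eq_extremum)

lemma prod_int:
  fixes \<mu> :: "real measure"
  assumes sf: "sigma_finite_measure \<mu>"
    and u: "u \<in> borel_measurable \<mu>" and v: "v \<in> borel_measurable \<mu>"
    and iu: "(\<integral>\<^sup>+ y. u y \<partial>\<mu>) = m" and iv: "(\<integral>\<^sup>+ y. v y \<partial>\<mu>) = m" and mfin: "m \<noteq> \<infinity>"
    and A: "A \<in> sets \<mu>"
  shows "(\<integral>\<^sup>+ x. u (fst x) * v (snd x) * qinv m * indicator A (fst x) \<partial>(\<mu> \<Otimes>\<^sub>M \<mu>)) = (\<integral>\<^sup>+ y. u y * indicator A y \<partial>\<mu>)"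
    and "(\<integral>\<^sup>+ x. u (fst x) * v (snd x) * qinv m * indicator A (snd x) \<partial>(\<mu> \<Otimes>\<^sub>M \<mu>)) = (\<integral>\<^sup>+ y. v y * indicator A y \<partial>\<mu>)"
proof -
  interpret sigma_finite_measure \<mu> by fact
  have [measurable]: "u \<in> borel_measurable \<mu>" by (rule u)
  have [measurable]: "v \<in> borel_measurable \<mu>" by (rule v)
  have [measurable]: "A \<in> sets \<mu>" by (rule A)
  have z1: "m = 0 \<Longrightarrow> (\<integral>\<^sup>+ y. u y * indicator A y \<partial>\<mu>) = 0"
  proof -
    assume "m = 0"
    moreover have "(\<integral>\<^sup>+ y. u y * indicator A y \<partial>\<mu>) \<le> (\<integral>\<^sup>+ y. u y \<partial>\<mu>)"
      by (intro nn_integral_mono) (auto simp: indicator_def)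
    ultimately show ?thesis using iu by simp
  qed
  have z2: "m = 0 \<Longrightarrow> (\<integral>\<^sup>+ y. v y * indicator A y \<partial>\<mu>) = 0"
  proof -
    assume "m = 0"
    moreover have "(\<integral>\<^sup>+ y. v y * indicator A y \<partial>\<mu>) \<le> (\<integral>\<^sup>+ y. v y \<partial>\<mu>)"
      by (intro nn_integral_mono) (auto simp: indicator_def)
    ultimately show ?thesis using iv by simp
  qed
  have "(\<integral>\<^sup>+ x. u (fst x) * v (snd x) * qinv m * indicator A (fst x) \<partial>(\<mu> \<Otimes>\<^sub>M \<mu>))
      = (\<integral>\<^sup>+ x. \<integral>\<^sup>+ y. u x * v y * qinv m * indicator A x \<partial>\<mu> \<partial>\<mu>)"
    by (rule nn_integral_fst[symmetric, where f="\<lambda>x. u (fst x) * v (snd x) * qinv m * indicator A (fst x)", simplified])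
       measurable
  also have "\<dots> = (\<integral>\<^sup>+ x. (u x * indicator A x) * (qinv m * m) \<partial>\<mu>)"
  proof (rule nn_integral_cong)
    fix x
    have "(\<integral>\<^sup>+ y. u x * v y * qinv m * indicator A x \<partial>\<mu>) = (\<integral>\<^sup>+ y. (u x * qinv m * indicator A x) * v y \<partial>\<mu>)"
      by (simp add: ac_simps)
    also have "\<dots> = (u x * qinv m * indicator A x) * m" using nn_integral_cmult[OF v] iv by simp
    finally show "(\<integral>\<^sup>+ y. u x * v y * qinv m * indicator A x \<partial>\<mu>) = (u x * indicator A x) * (qinv m * m)"
      by (simp add: ac_simps)
  qed
  also have "\<dots> = (\<integral>\<^sup>+ y. u y * indicator A y \<partial>\<mu>) * (qinv m * m)"
    by (rule nn_integral_multc) measurable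
  also have "\<dots> = (\<integral>\<^sup>+ y. u y * indicator A y \<partial>\<mu>)"
  proof (cases "m = 0")
    case True then show ?thesis using z1 by simp
  next
    case False then show ?thesis using qinv_mult[OF mfin False] by simp
  qed
  finally show "(\<integral>\<^sup>+ x. u (fst x) * v (snd x) * qinv m * indicator A (fst x) \<partial>(\<mu> \<Otimes>\<^sub>M \<mu>)) = (\<integral>\<^sup>+ y. u y * indicator A y \<partial>\<mu>)" .
  have "(\<integral>\<^sup>+ x. u (fst x) * v (snd x) * qinv m * indicator A (snd x) \<partial>(\<mu> \<Otimes>\<^sub>M \<mu>))
      = (\<integral>\<^sup>+ x. \<integral>\<^sup>+ y. u x * v y * qinv m * indicator A y \<partial>\<mu> \<partial>\<mu>)"
    by (rule nn_integral_fst[symmetric, where f="\<lambda>x. u (fst x) * v (snd x) * qinv m * indicator A (snd x)", simplified])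
       measurable
  also have "\<dots> = (\<integral>\<^sup>+ x. u x * (qinv m * (\<integral>\<^sup>+ y. v y * indicator A y \<partial>\<mu>)) \<partial>\<mu>)"
  proof (rule nn_integral_cong)
    fix x
    have "(\<integral>\<^sup>+ y. u x * v y * qinv m * indicator A y \<partial>\<mu>) = (\<integral>\<^sup>+ y. (u x * qinv m) * (v y * indicator A y) \<partial>\<mu>)"
      by (simp add: ac_simps)
    also have "\<dots> = (u x * qinv m) * (\<integral>\<^sup>+ y. v y * indicator A y \<partial>\<mu>)"
      by (rule nn_integral_cmult) measurable
    finally show "(\<integral>\<^sup>+ y. u x * v y * qinv m * indicator A y \<partial>\<mu>) = u x * (qinv m * (\<integral>\<^sup>+ y. v y * indicator A y \<partial>\<mu>))"
      by (simp add: ac_simps)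
  qed
  also have "\<dots> = m * (qinv m * (\<integral>\<^sup>+ y. v y * indicator A y \<partial>\<mu>))"
    using nn_integral_multc[OF u] iu by simp
  also have "\<dots> = (\<integral>\<^sup>+ y. v y * indicator A y \<partial>\<mu>)"
  proof (cases "m = 0")
    case True then show ?thesis using z2 by simp
  next
    case False
    have "m * (qinv m * (\<integral>\<^sup>+ y. v y * indicator A y \<partial>\<mu>)) = (qinv m * m) * (\<integral>\<^sup>+ y. v y * indicator A y \<partial>\<mu>)"
      by (simp only: ac_simps)
    then show ?thesis using qinv_mult[OF mfin False] by simp
  qed
  finally show "(\<integral>\<^sup>+ x. u (fst x) * v (snd x) * qinv m * indicator A (snd x) \<partial>(\<mu> \<Otimes>\<^sub>M \<mu>)) = (\<integral>\<^sup>+ y. v y * indicator A y \<partial>\<mu>)" .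
qed


locale pdcon = pdset +
  fixes p :: real
  assumes p_lo: "lower_pdf P \<le> p" and p_up: "p \<le> upper_pdf P"
begin

definition w :: "bool \<Rightarrow> real" where "w d = cprob P UNIV d (\<not> d) - p"
definition mn :: "bool \<Rightarrow> real \<Rightarrow> ennreal" where "mn d y = ennreal (min (f y d d) (f y d (\<not> d)))"
definition MM :: "bool \<Rightarrow> ennreal" where "MM d = (\<integral>\<^sup>+ y. mn d y \<partial>\<mu>)"
definition sc :: "bool \<Rightarrow> ennreal" where "sc d = (if MM d = 0 then 0 else ennreal (w d) / MM d)"
definition com :: "bool \<Rightarrow> real \<Rightarrow> ennreal" where "com d y = sc d * mn d y"
definition rem :: "bool \<Rightarrow> bool \<Rightarrow> real \<Rightarrow> ennreal" where "rem d z y = ennreal (f y d z) - com d y"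
definition dens :: "bool \<Rightarrow> bool \<times> bool \<Rightarrow> real \<Rightarrow> ennreal" where
  "dens d t = (if fst t = d \<and> snd t = d then com d else if snd t = d then rem d True
     else if fst t = d then rem d False else com (\<not> d))"
definition mass :: "bool \<times> bool \<Rightarrow> ennreal" where "mass t = (\<integral>\<^sup>+ y. dens True t y \<partial>\<mu>)"

lemma p_nonneg: "0 \<le> p" using p_lo unfolding lower_pdf_def by linarith

lemma w_nonneg: "0 \<le> w d"
  using p_up unfolding w_def upper_pdf_def cprobD_def by (cases d) auto

lemma mn_meas[measurable]: "mn d \<in> borel_measurable \<mu>"
proof -
  have [measurable]: "(\<lambda>y. f y d z) \<in> borel_measurable \<mu>" for z by (rule fmu)
  show ?thesis unfolding mn_def by measurable
qed
lemma com_meas[measurable]: "com d \<in> borel_measurable \<mu>"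
  unfolding com_def by measurable
lemma rem_meas[measurable]: "rem d z \<in> borel_measurable \<mu>"
proof -
  have [measurable]: "(\<lambda>y. f y d z) \<in> borel_measurable \<mu>" by (rule fmu)
  show ?thesis unfolding rem_def by measurable
qed
lemma dens_meas[measurable]: "dens d t \<in> borel_measurable \<mu>"
  unfolding dens_def
  by (cases "fst t = d \<and> snd t = d"; cases "snd t = d"; cases "fst t = d") (simp_all add: com_meas rem_meas)

lemma int_f: "(\<integral>\<^sup>+ y. ennreal (f y d z) \<partial>\<mu>) = ennreal (cprob P UNIV d z)"
  using int_ind[of UNIV d z] by simp

lemma MM_ge: "ennreal (w d) \<le> MM d"
  using min_ge[OF p_lo, of d] unfolding MM_def mn_def w_def .

lemma MM_fin: "MM d \<noteq> \<infinity>"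
proof -
  have "MM d \<le> (\<integral>\<^sup>+ y. ennreal (f y d d) \<partial>\<mu>)"
    unfolding MM_def mn_def by (intro nn_integral_mono ennreal_leI) simp
  then have h: "MM d \<le> ennreal (cprob P UNIV d d)" by (rule ord_le_eq_trans[OF _ int_f])
  show ?thesis
  proof
    assume "MM d = \<infinity>"
    then show False using h ennreal_less_top[of "cprob P UNIV d d"] by (metis infinity_ennreal_def leD)
  qed
qed

lemma sc_le1: "sc d \<le> 1"
proof (cases "MM d = 0")
  case True then show ?thesis by (simp add: sc_def)
next
  case False
  have "ennreal (w d) / MM d \<le> 1"
    by (rule divide_le_posI_ennreal) (use False MM_ge[of d] in \<open>simp_all add: zero_less_iff_neq_zero\<close>)
  then show ?thesis using False by (simp add: sc_def)
qed

lemma int_com: "(\<integral>\<^sup>+ y. com d y \<partial>\<mu>) = ennreal (w d)"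
proof -
  have "(\<integral>\<^sup>+ y. com d y \<partial>\<mu>) = sc d * MM d"
    unfolding com_def MM_def by (rule nn_integral_cmult) simp
  also have "\<dots> = ennreal (w d)"
  proof (cases "MM d = 0")
    case True
    then have "ennreal (w d) \<le> 0" using MM_ge[of d] by simp
    then have "w d = 0" using w_nonneg[of d] by simp
    then show ?thesis using True by (simp add: sc_def)
  next
    case False
    then show ?thesis unfolding sc_def using MM_fin[of d]
      by (simp add: ennreal_divide_times top.not_eq_extremum)
  qed
  finally show ?thesis .
qed

lemma com_le: "com d y \<le> ennreal (f y d z)"
proof -
  have "com d y \<le> 1 * mn d y" unfolding com_def by (intro mult_right_mono sc_le1) simp
  also have "\<dots> \<le> ennreal (f y d z)" unfolding mn_def by (cases "z = d") (auto intro!: ennreal_leI)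
  finally show ?thesis .
qed

lemma rem_add: "rem d z y + com d y = ennreal (f y d z)"
  unfolding rem_def by (rule diff_add_cancel_ennreal[OF com_le])

lemma int_split: assumes A: "A \<in> sets borel"
  shows "(\<integral>\<^sup>+ y. rem d z y * indicator A y \<partial>\<mu>) + (\<integral>\<^sup>+ y. com d y * indicator A y \<partial>\<mu>)
     = ennreal (cprob P A d z)"
proof -
  have [measurable]: "A \<in> sets \<mu>" using mu_setsI[OF A] .
  have "(\<integral>\<^sup>+ y. rem d z y * indicator A y \<partial>\<mu>) + (\<integral>\<^sup>+ y. com d y * indicator A y \<partial>\<mu>)
     = (\<integral>\<^sup>+ y. rem d z y * indicator A y + com d y * indicator A y \<partial>\<mu>)"
    by (rule nn_integral_add[symmetric]) measurable
  also have "\<dots> = (\<integral>\<^sup>+ y. ennreal (f y d z) * indicator A y \<partial>\<mu>)"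
    by (intro nn_integral_cong) (simp add: distrib_right[symmetric] rem_add)
  also have "\<dots> = ennreal (cprob P A d z)" by (rule int_ind[OF A])
  finally show ?thesis .
qed

lemma int_rem: "(\<integral>\<^sup>+ y. rem d z y \<partial>\<mu>) = ennreal (cprob P UNIV d z - w d)"
proof -
  have "(\<integral>\<^sup>+ y. rem d z y \<partial>\<mu>) + ennreal (w d) = ennreal (cprob P UNIV d z)"
    using int_split[of UNIV d z] int_com[of d] by simp
  then have "(\<integral>\<^sup>+ y. rem d z y \<partial>\<mu>) = ennreal (cprob P UNIV d z) - ennreal (w d)"
    by (metis ennreal_add_diff_cancel_right ennreal_neq_top)
  also have "\<dots> = ennreal (cprob P UNIV d z - w d)" by (rule ennreal_minus[OF w_nonneg])
  finally show ?thesis .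
qed

lemma c_sum2: "cprob P UNIV False z = 1 - cprob P UNIV True z" using c_sum[of z] by simp

lemma mass_F: "(\<integral>\<^sup>+ y. dens False t y \<partial>\<mu>) = mass t"
proof -
  obtain a b where t: "t = (a, b)" by (cases t)
  show ?thesis unfolding mass_def t
    by (cases a; cases b) (simp_all add: dens_def int_com int_rem w_def c_sum2 algebra_simps)
qed

lemma mass_fin: "mass t \<noteq> \<infinity>"
proof -
  obtain a b where t: "t = (a, b)" by (cases t)
  show ?thesis unfolding mass_def t
    by (cases a; cases b) (simp_all add: dens_def int_com int_rem)
qed

lemma mass_TF: "mass (True, False) = ennreal p"
  unfolding mass_def by (simp add: dens_def int_rem w_def)

lemma Kint: assumes A: "A \<in> sets borel"
  shows "(\<integral>\<^sup>+ x. dens True t (fst x) * dens False t (snd x) * qinv (mass t) * indicator A (if d then fst x else snd x) \<partial>(\<mu> \<Otimes>\<^sub>M \<mu>))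
    = (\<integral>\<^sup>+ y. dens d t y * indicator A y \<partial>\<mu>)"
proof -
  have iu: "(\<integral>\<^sup>+ y. dens True t y \<partial>\<mu>) = mass t" by (simp add: mass_def)
  note pi = prod_int[OF mu_sf dens_meas dens_meas iu mass_F mass_fin mu_setsI[OF A]]
  show ?thesis by (cases d) (simp_all add: pi)
qed

end

lemma UNIV_bb: "(UNIV :: (bool \<times> bool) set) = {(True,True),(True,False),(False,True),(False,False)}"
  by auto

lemma QY_sets: "A \<in> sets borel \<Longrightarrow> {l. Q (snd l) \<and> lY d l \<in> A} \<in> sets latentM"
proof -
  assume A: "A \<in> sets borel"
  have [measurable]: "(\<lambda>l::latent. Q (snd l)) \<in> measurable latentM (count_space UNIV)"
    by (rule measurable_compose[OF meas_snd_lat]) simp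
  have "{l. Q (snd l) \<and> lY d l \<in> A} = {l \<in> space latentM. Q (snd l) \<and> lY d l \<in> A}" by (simp add: space_latentM)
  also have "\<dots> \<in> sets latentM" using A by measurable
  finally show ?thesis .
qed

context pdcon begin

lemma int_split2: "A \<in> sets borel \<Longrightarrow> (\<integral>\<^sup>+ y. com d y * indicator A y \<partial>\<mu>) + (\<integral>\<^sup>+ y. rem d z y * indicator A y \<partial>\<mu>)
     = ennreal (cprob P A d z)"
  using int_split[of A d z] by (simp add: add.commute)

definition KK :: "(bool \<times> bool) \<times> (real \<times> real) \<Rightarrow> ennreal" where
  "KK \<omega> = dens True (fst \<omega>) (fst (snd \<omega>)) * dens False (fst \<omega>) (snd (snd \<omega>)) * qinv (mass (fst \<omega>))"
definition BM :: "((bool \<times> bool) \<times> (real \<times> real)) measure" where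
  "BM = count_space UNIV \<Otimes>\<^sub>M (\<mu> \<Otimes>\<^sub>M \<mu>)"
definition emb :: "(bool \<times> bool) \<times> (real \<times> real) \<Rightarrow> latent" where
  "emb \<omega> = ((fst (snd \<omega>), fst (snd \<omega>), snd (snd \<omega>), snd (snd \<omega>)), fst \<omega>)"
definition Lat :: "latent measure" where "Lat = distr (density BM KK) latentM emb"

lemma space_mu: "space \<mu> = UNIV" using sets_eq_imp_space_eq[OF mu_sets] by simp
lemma space_BM: "space BM = UNIV" by (simp add: BM_def space_pair_measure space_mu)
lemma mumu_sets: "sets (\<mu> \<Otimes>\<^sub>M \<mu>) = sets (borel \<Otimes>\<^sub>M borel)"
  by (rule sets_pair_measure_cong[OF mu_sets mu_sets])

lemma emb_meas: "emb \<in> measurable BM latentM"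
  unfolding BM_def
proof (rule measurable_pair_measure_countable1)
  show "countable (UNIV :: (bool \<times> bool) set)" by simp
  fix t :: "bool \<times> bool"
  have "(\<lambda>x::real \<times> real. ((fst x, fst x, snd x, snd x), t)) \<in> measurable (borel \<Otimes>\<^sub>M borel) latentM"
    unfolding latentM_eq by measurable
  then show "(\<lambda>x. emb (t, x)) \<in> measurable (\<mu> \<Otimes>\<^sub>M \<mu>) latentM"
    unfolding emb_def by (subst measurable_cong_sets[OF mumu_sets refl]) simp
qed

lemma KK_meas: "KK \<in> borel_measurable BM"
  unfolding BM_def
proof (rule measurable_pair_measure_countable1)
  show "countable (UNIV :: (bool \<times> bool) set)" by simp
  fix t :: "bool \<times> bool"
  have e: "(\<lambda>x. KK (t, x)) = (\<lambda>x. dens True t (fst x) * dens False t (snd x) * qinv (mass t))"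
    by (simp add: KK_def fun_eq_iff)
  show "(\<lambda>x. KK (t, x)) \<in> borel_measurable (\<mu> \<Otimes>\<^sub>M \<mu>)"
    unfolding e by measurable
qed

lemma sets_Lat: "sets Lat = sets latentM" by (simp add: Lat_def)
lemma space_Lat: "space Lat = UNIV" using sets_eq_imp_space_eq[OF sets_Lat] space_latentM by simp

lemma Lat_formula: assumes X: "X \<in> sets latentM"
  shows "emeasure Lat X = (\<Sum>t\<in>UNIV. \<integral>\<^sup>+ x. KK (t, x) * indicator (emb -` X) (t, x) \<partial>(\<mu> \<Otimes>\<^sub>M \<mu>))"
proof -
  interpret mm: sigma_finite_measure "\<mu> \<Otimes>\<^sub>M \<mu>" by (rule sigma_finite_pair_measure[OF mu_sf mu_sf])
  have em: "emb \<in> measurable (density BM KK) latentM"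
    using emb_meas measurable_cong_sets[of "density BM KK" BM latentM latentM] by simp
  have pre: "emb -` X \<in> sets BM" using measurable_sets[OF emb_meas X] space_BM by simp
  have [measurable]: "KK \<in> borel_measurable (count_space UNIV \<Otimes>\<^sub>M (\<mu> \<Otimes>\<^sub>M \<mu>))"
    using KK_meas by (simp add: BM_def)
  have [measurable]: "emb -` X \<in> sets (count_space UNIV \<Otimes>\<^sub>M (\<mu> \<Otimes>\<^sub>M \<mu>))"
    using pre by (simp add: BM_def)
  have "emeasure Lat X = emeasure (density BM KK) (emb -` X)"
    unfolding Lat_def using emeasure_distr[OF em X] space_BM by simp
  also have "\<dots> = (\<integral>\<^sup>+ \<omega>. KK \<omega> * indicator (emb -` X) \<omega> \<partial>BM)"
    by (rule emeasure_density[OF KK_meas pre])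
  also have "\<dots> = (\<integral>\<^sup>+ t. \<integral>\<^sup>+ x. KK (t, x) * indicator (emb -` X) (t, x) \<partial>(\<mu> \<Otimes>\<^sub>M \<mu>) \<partial>count_space UNIV)"
    unfolding BM_def
    by (rule mm.nn_integral_fst[symmetric, where f="\<lambda>\<omega>. KK \<omega> * indicator (emb -` X) \<omega>", simplified])
       measurable
  also have "\<dots> = (\<Sum>t\<in>UNIV. \<integral>\<^sup>+ x. KK (t, x) * indicator (emb -` X) (t, x) \<partial>(\<mu> \<Otimes>\<^sub>M \<mu>))"
    by (rule nn_integral_count_space_finite) simp
  finally show ?thesis .
qed


lemma Lat_gen: assumes A: "A \<in> sets borel"
  shows "emeasure Lat {l. Q (snd l) \<and> lY d l \<in> A}
     = (\<Sum>t\<in>UNIV. if Q t then (\<integral>\<^sup>+ y. dens d t y * indicator A y \<partial>\<mu>) else 0)"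
proof -
  have "emeasure Lat {l. Q (snd l) \<and> lY d l \<in> A}
     = (\<Sum>t\<in>UNIV. \<integral>\<^sup>+ x. KK (t, x) * indicator (emb -` {l. Q (snd l) \<and> lY d l \<in> A}) (t, x) \<partial>(\<mu> \<Otimes>\<^sub>M \<mu>))"
    by (rule Lat_formula[OF QY_sets[OF A]])
  also have "\<dots> = (\<Sum>t\<in>UNIV. if Q t then (\<integral>\<^sup>+ y. dens d t y * indicator A y \<partial>\<mu>) else 0)"
  proof (rule sum.cong[OF refl])
    fix t :: "bool \<times> bool"
    show "(\<integral>\<^sup>+ x. KK (t, x) * indicator (emb -` {l. Q (snd l) \<and> lY d l \<in> A}) (t, x) \<partial>(\<mu> \<Otimes>\<^sub>M \<mu>))
      = (if Q t then (\<integral>\<^sup>+ y. dens d t y * indicator A y \<partial>\<mu>) else 0)"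
    proof (cases "Q t")
      case True
      have "(\<integral>\<^sup>+ x. KK (t, x) * indicator (emb -` {l. Q (snd l) \<and> lY d l \<in> A}) (t, x) \<partial>(\<mu> \<Otimes>\<^sub>M \<mu>))
        = (\<integral>\<^sup>+ x. dens True t (fst x) * dens False t (snd x) * qinv (mass t) * indicator A (if d then fst x else snd x) \<partial>(\<mu> \<Otimes>\<^sub>M \<mu>))"
        by (intro nn_integral_cong) (simp add: KK_def emb_def lY_def True indicator_def)
      also have "\<dots> = (\<integral>\<^sup>+ y. dens d t y * indicator A y \<partial>\<mu>)" by (rule Kint[OF A])
      finally show ?thesis using True by simp
    next
      case False
      have "(\<integral>\<^sup>+ x. KK (t, x) * indicator (emb -` {l. Q (snd l) \<and> lY d l \<in> A}) (t, x) \<partial>(\<mu> \<Otimes>\<^sub>M \<mu>))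
        = (\<integral>\<^sup>+ x. 0 \<partial>(\<mu> \<Otimes>\<^sub>M \<mu>))"
        by (intro nn_integral_cong) (simp add: emb_def False indicator_def)
      then show ?thesis using False by simp
    qed
  qed
  finally show ?thesis .
qed

lemma Lat_SS: assumes A: "A \<in> sets borel"
  shows "emeasure Lat (SS d z A) = ennreal (cprob P A d z)"
proof -
  have e: "SS d z A = {l. (\<lambda>t. (if z then snd t else fst t) = d) (snd l) \<and> lY d l \<in> A}"
    by (auto simp: SS_def lD_def)
  have "emeasure Lat (SS d z A) = (\<Sum>t\<in>UNIV. if (if z then snd t else fst t) = d then (\<integral>\<^sup>+ y. dens d t y * indicator A y \<partial>\<mu>) else 0)"
    using Lat_gen[OF A, of "\<lambda>t. (if z then snd t else fst t) = d" d] e by simp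
  then show ?thesis
    by (cases d; cases z) (simp_all add: UNIV_bb dens_def int_split[OF A] int_split2[OF A])
qed

lemma Def_eq: "Def = {l. (\<lambda>t. fst t \<and> \<not> snd t) (snd l) \<and> lY True l \<in> UNIV}"
  by (auto simp: Def_def)

lemma Lat_Def: "emeasure Lat Def = ennreal p"
proof -
  have "emeasure Lat Def = (\<Sum>t\<in>UNIV. if fst t \<and> \<not> snd t then (\<integral>\<^sup>+ y. dens True t y * indicator UNIV y \<partial>\<mu>) else 0)"
    using Lat_gen[OF sets.top[of borel, unfolded space_borel], of "\<lambda>t. fst t \<and> \<not> snd t" True] Def_eq by simp
  then have "emeasure Lat Def = (\<integral>\<^sup>+ y. rem True False y \<partial>\<mu>)"
    by (simp add: UNIV_bb dens_def)
  then show ?thesis by (simp add: int_rem w_def)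
qed

lemma prob_Lat: "prob_space Lat"
proof (rule prob_spaceI)
  have u: "UNIV = SS True True UNIV \<union> SS False True UNIV" by (auto simp: SS_def lD_def)
  have "emeasure Lat (SS True True UNIV) + emeasure Lat (SS False True UNIV) = emeasure Lat UNIV"
    unfolding u
  proof (rule plus_emeasure)
    show "SS True True UNIV \<in> sets Lat" using SS_sets[of UNIV True True] sets_Lat by simp
    show "SS False True UNIV \<in> sets Lat" using SS_sets[of UNIV False True] sets_Lat by simp
    show "SS True True UNIV \<inter> SS False True UNIV = {}" by (auto simp: SS_def)
  qed
  then have "emeasure Lat UNIV = ennreal (cprob P UNIV True True) + ennreal (cprob P UNIV False True)"
    using Lat_SS[of UNIV] by simp
  also have "\<dots> = 1" using c_sum[of True] c_nonneg
    by (metis ennreal_1 ennreal_plus)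
  finally show "emeasure Lat (space Lat) = 1" by (simp add: space_Lat)
qed

lemma Lat_pre: "X \<in> sets latentM \<Longrightarrow> Y \<in> sets latentM \<Longrightarrow> emb -` X = emb -` Y \<Longrightarrow> emeasure Lat X = emeasure Lat Y"
  by (simp add: Lat_formula)

end

lemma Zv_vimage: "Zv -` B = UNIV \<times> B"
  unfolding Zv_def by (rule set_eqI) (simp add: mem_Times_iff)
lemma fst_vimage: "fst -` A = A \<times> UNIV"
  by (rule set_eqI) (simp add: mem_Times_iff)

lemma obs_pt_meas: "(\<lambda>y. (y, d, z)) \<in> measurable borel obsM"
  unfolding obsM_eq by measurable

lemma obs_eq:
  assumes M: "sets M = sets obsM" and N: "sets N = sets obsM"
    and eq: "\<And>A d z. A \<in> sets borel \<Longrightarrow> emeasure M (slice A d z) = emeasure N (slice A d z)"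
  shows "M = N"
proof (rule measure_eqI)
  show "sets M = sets N" using M N by simp
  fix X assume X: "X \<in> sets M"
  define sec where "sec i = (\<lambda>y. (y, fst i, snd i)) -` X" for i :: "bool \<times> bool"
  have secb: "sec i \<in> sets borel" for i
  proof -
    have "(\<lambda>y. (y, fst i, snd i)) -` X \<inter> space borel \<in> sets borel"
      by (rule measurable_sets[OF obs_pt_meas]) (use X M in simp)
    then show ?thesis by (simp add: sec_def)
  qed
  have XU: "X = (\<Union>i\<in>UNIV. slice (sec i) (fst i) (snd i))"
    by (auto simp: slice_def sec_def)
  have disj: "disjoint_family_on (\<lambda>i. slice (sec i) (fst i) (snd i)) UNIV"
    by (auto simp: disjoint_family_on_def slice_def)
  have sM: "(\<lambda>i. slice (sec i) (fst i) (snd i)) ` UNIV \<subseteq> sets M"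
    using slice_sets[OF secb] M by auto
  have sN: "(\<lambda>i. slice (sec i) (fst i) (snd i)) ` UNIV \<subseteq> sets N"
    using slice_sets[OF secb] N by auto
  have "emeasure M X = emeasure M (\<Union>i\<in>UNIV. slice (sec i) (fst i) (snd i))" using XU by simp
  also have "\<dots> = (\<Sum>i\<in>UNIV. emeasure M (slice (sec i) (fst i) (snd i)))"
    by (rule sum_emeasure[symmetric, OF sM disj]) simp
  also have "\<dots> = (\<Sum>i\<in>UNIV. emeasure N (slice (sec i) (fst i) (snd i)))"
    using eq secb by simp
  also have "\<dots> = emeasure N (\<Union>i\<in>UNIV. slice (sec i) (fst i) (snd i))"
    by (rule sum_emeasure[OF sN disj]) simp
  also have "\<dots> = emeasure N X" using XU by simp
  finally show "emeasure M X = emeasure N X" .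
qed

context pdcon begin

definition Zm :: "bool measure" where "Zm = measure_pmf (bernoulli_pmf (measure P (Zset True)))"
definition Lw :: "omega measure" where "Lw = Lat \<Otimes>\<^sub>M Zm"

lemma Zset_F: "measure P (Zset False) = 1 - measure P (Zset True)"
proof -
  interpret prob_space P by (rule P_prob)
  have e: "Zset False = space P - Zset True" by (auto simp: Zset_def spP)
  show ?thesis unfolding e by (rule prob_compl[OF ZsetP])
qed

lemma pi01: "0 \<le> measure P (Zset True)" "measure P (Zset True) \<le> 1"
  using Zpos[of True] Zpos[of False] Zset_F by auto

lemma Zm_single: "emeasure Zm {z} = ennreal (measure P (Zset z))"
  unfolding Zm_def emeasure_pmf_single using pi01 Zset_F by (cases z) simp_all

lemma prob_Zm: "prob_space Zm" unfolding Zm_def by (rule prob_space_measure_pmf)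
lemma sets_Zm: "sets Zm = UNIV" by (simp add: Zm_def)
lemma Zm_UNIV: "emeasure Zm UNIV = 1"
  using prob_space.emeasure_space_1[OF prob_Zm] by (simp add: Zm_def)

lemma sets_Lw: "sets Lw = sets omegaM"
  unfolding Lw_def omegaM_def by (rule sets_pair_measure_cong) (simp_all add: sets_Lat sets_Zm)

lemma space_Lw: "space Lw = UNIV" using sets_eq_imp_space_eq[OF sets_Lw] space_omegaM by simp

lemma prob_Lw: "prob_space Lw" unfolding Lw_def by (rule prob_space_pair[OF prob_Lat prob_Zm])

lemma Lw_times: "X \<in> sets latentM \<Longrightarrow> emeasure Lw (X \<times> B) = emeasure Lat X * emeasure Zm B"
  unfolding Lw_def
  by (rule sigma_finite_measure.emeasure_pair_measure_Times[OF prob_space_imp_sigma_finite[OF prob_Zm]])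
     (simp_all add: sets_Lat sets_Zm)

lemma fin_Lat: "emeasure Lat X \<noteq> \<infinity>"
proof -
  interpret prob_space Lat by (rule prob_Lat)
  show ?thesis using emeasure_finite by simp
qed
lemma fin_Zm: "emeasure Zm X \<noteq> \<infinity>"
proof -
  interpret prob_space Zm by (rule prob_Zm)
  show ?thesis using emeasure_finite by simp
qed

lemma measure_Lw_times: "X \<in> sets latentM \<Longrightarrow> measure Lw (X \<times> B) = measure Lat X * measure Zm B"
  unfolding measure_def using Lw_times by (simp add: enn2real_mult)

lemma p_df_Lw: "p_df Lw = p"
proof -
  have e: "{w \<in> space Lw. D0 w \<and> \<not> D1 w} = Def \<times> UNIV"
    by (auto simp: space_Lw D0_def D1_def Def_def)
  have "emeasure Lw (Def \<times> UNIV) = ennreal p"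
    using Lw_times[OF Def_sets, of UNIV] Lat_Def Zm_UNIV by simp
  then show ?thesis unfolding p_df_def e measure_def using p_nonneg by simp
qed

lemma fst_Lw: "fst \<in> measurable Lw latentM"
proof -
  have "fst \<in> measurable Lw Lat" unfolding Lw_def by simp
  moreover have "measurable Lw Lat = measurable Lw latentM" by (rule measurable_cong_sets[OF refl sets_Lat])
  ultimately show ?thesis by simp
qed

lemma RA_Lw: "RA Lw"
  unfolding RA_def
proof -
  interpret prob_space Lw by (rule prob_Lw)
  show "indep_set {fst -` A \<inter> space Lw | A. A \<in> sets latentM}
      {Zv -` B \<inter> space Lw | B. B \<in> sets (count_space (UNIV :: bool set))}"
  proof (rule indep_setI)
    show "{fst -` A \<inter> space Lw | A. A \<in> sets latentM} \<subseteq> events"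
    proof
      fix a assume "a \<in> {fst -` A \<inter> space Lw | A. A \<in> sets latentM}"
      then obtain A where "A \<in> sets latentM" "a = fst -` A \<inter> space Lw" by blast
      then show "a \<in> events" using measurable_sets[OF fst_Lw] by simp
    qed
    show "{Zv -` B \<inter> space Lw | B. B \<in> sets (count_space (UNIV :: bool set))} \<subseteq> events"
    proof
      fix b assume "b \<in> {Zv -` B \<inter> space Lw | B. B \<in> sets (count_space (UNIV :: bool set))}"
      then obtain B where b: "b = Zv -` B \<inter> space Lw" by blast
      have "b = UNIV \<times> B" unfolding b space_Lw Zv_vimage by simp
      moreover have "UNIV \<times> B \<in> sets (latentM \<Otimes>\<^sub>M count_space UNIV)"
        by (rule pair_measureI) (use sets.top[of latentM] space_latentM in simp_all)
      ultimately show "b \<in> events" by (simp add: sets_Lw omegaM_def)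
    qed
    fix a b
    assume a: "a \<in> {fst -` A \<inter> space Lw | A. A \<in> sets latentM}"
      and b: "b \<in> {Zv -` B \<inter> space Lw | B. B \<in> sets (count_space (UNIV :: bool set))}"
    from a obtain A where A: "A \<in> sets latentM" and a': "a = fst -` A \<inter> space Lw" by blast
    from b obtain B where b': "b = Zv -` B \<inter> space Lw" by blast
    have ae: "a = A \<times> UNIV" unfolding a' space_Lw fst_vimage by simp
    have be: "b = UNIV \<times> B" unfolding b' space_Lw Zv_vimage by simp
    have "a \<inter> b = A \<times> B" using ae be by auto
    then show "prob (a \<inter> b) = prob a * prob b"
      using measure_Lw_times[OF A, of B] measure_Lw_times[OF A, of UNIV]
        measure_Lw_times[OF sets.top[of latentM, unfolded space_latentM], of B] ae be
        prob_space.prob_space[OF prob_Lat] prob_space.prob_space[OF prob_Zm]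
      by (simp add: space_Lat sets_Zm prob_Zm Zm_def)
  qed
qed


definition Bad :: "latent set" where
  "Bad = {l. \<not> (fst (fst l) = fst (snd (fst l)) \<and> fst (snd (snd (fst l))) = snd (snd (snd (fst l))))}"

lemma Bad_sets: "Bad \<in> sets latentM"
proof -
  have "Bad = {l \<in> space latentM. \<not> (fst (fst l) = fst (snd (fst l)) \<and> fst (snd (snd (fst l))) = snd (snd (snd (fst l))))}"
    by (simp add: Bad_def space_latentM)
  also have "\<dots> \<in> sets latentM" unfolding latentM_eq by measurable
  finally show ?thesis .
qed

lemma ER_Lw: "ER Lw"
  unfolding ER_def
proof (rule AE_I')
  have "emb -` Bad = emb -` {}" by (auto simp: emb_def Bad_def)
  then have "emeasure Lat Bad = 0" using Lat_pre[OF Bad_sets sets.empty_sets] by simp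
  then have "emeasure Lw (Bad \<times> UNIV) = 0" using Lw_times[OF Bad_sets] by simp
  moreover have "Bad \<times> UNIV \<in> sets Lw"
    unfolding sets_Lw omegaM_def by (rule pair_measureI) (simp_all add: Bad_sets)
  ultimately show "Bad \<times> UNIV \<in> null_sets Lw" by (simp add: null_sets_def)
  show "{x \<in> space Lw. \<not> (Y11 x = Y10 x \<and> Y01 x = Y00 x)} \<subseteq> Bad \<times> UNIV"
  proof
    fix x assume "x \<in> {x \<in> space Lw. \<not> (Y11 x = Y10 x \<and> Y01 x = Y00 x)}"
    then have "fst x \<in> Bad" by (simp add: Bad_def Y11_def Y10_def Y01_def Y00_def)
    then show "x \<in> Bad \<times> UNIV" by (simp add: mem_Times_iff)
  qed
qed

lemma distr_Lw: "distr Lw obsM obs_map = P"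
proof (rule obs_eq)
  show "sets (distr Lw obsM obs_map) = sets obsM" by simp
  show "sets P = sets obsM" by (rule P_sets)
  fix A :: "real set" and d z :: bool assume A: "A \<in> sets borel"
  have om: "obs_map \<in> measurable Lw obsM"
    using obs_map_meas measurable_cong_sets[OF sets_Lw refl, of obsM] by simp
  define TT where "TT = {l. obs_map (l, z) \<in> slice A d z}"
  have pm: "(\<lambda>l. (l, z)) \<in> measurable latentM omegaM" unfolding omegaM_def by simp
  have TTs: "TT \<in> sets latentM"
  proof -
    have "(\<lambda>l. (l, z)) -` (obs_map -` slice A d z \<inter> space omegaM) \<inter> space latentM \<in> sets latentM"
      by (rule measurable_sets[OF pm measurable_sets[OF obs_map_meas slice_sets[OF A]]])
    then show ?thesis by (simp add: TT_def space_omegaM space_latentM vimage_def)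
  qed
  have pre: "obs_map -` slice A d z \<inter> space Lw = TT \<times> {z}"
  proof (rule set_eqI)
    fix w :: omega
    obtain l z' where w: "w = (l, z')" by (cases w)
    show "w \<in> obs_map -` slice A d z \<inter> space Lw \<longleftrightarrow> w \<in> TT \<times> {z}"
      unfolding w by (cases "z' = z") (simp_all add: space_Lw TT_def obs_map_def slice_def Zv_def)
  qed
  have "emb -` TT = emb -` SS d z A"
  proof (rule set_eqI)
    fix \<omega> :: "(bool \<times> bool) \<times> (real \<times> real)"
    obtain t a b where o: "\<omega> = (t, (a, b))" by (cases \<omega>) auto
    show "\<omega> \<in> emb -` TT \<longleftrightarrow> \<omega> \<in> emb -` SS d z A"
      unfolding o by (cases d; cases z)
        (simp_all add: TT_def SS_def emb_def obs_map_def slice_def lD_def lY_def Yobs_def Dobs_def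
          Y11_def Y10_def Y01_def Y00_def D0_def D1_def Zv_def)
  qed
  then have LT: "emeasure Lat TT = ennreal (cprob P A d z)"
    using Lat_pre[OF TTs SS_sets[OF A]] Lat_SS[OF A] by simp
  have "emeasure (distr Lw obsM obs_map) (slice A d z) = emeasure Lw (TT \<times> {z})"
    using emeasure_distr[OF om slice_sets[OF A]] pre by simp
  also have "\<dots> = ennreal (cprob P A d z) * ennreal (measure P (Zset z))"
    using Lw_times[OF TTs] LT Zm_single by simp
  also have "\<dots> = ennreal (cprob P A d z * measure P (Zset z))"
    by (rule ennreal_mult[symmetric]) (simp_all add: c_nonneg)
  also have "cprob P A d z * measure P (Zset z) = measure P (slice A d z)"
    using Zpos[of z] unfolding cprob_eq by simp
  also have "ennreal (measure P (slice A d z)) = emeasure P (slice A d z)"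
  proof -
    interpret prob_space P by (rule P_prob)
    show ?thesis by (simp add: emeasure_eq_measure)
  qed
  finally show "emeasure (distr Lw obsM obs_map) (slice A d z) = emeasure P (slice A d z)" .
qed

lemma p_mem: "p \<in> identified_set_pdf P"
  unfolding identified_set_pdf_def mem_Collect_eq
  by (rule exI[of _ Lw]) (simp add: prob_Lw sets_Lw RA_Lw ER_Lw distr_Lw p_df_Lw)

end

theorem proposition1:
  fixes P :: "obs measure" and \<mu> :: "real measure"
    and f :: "real \<Rightarrow> bool \<Rightarrow> bool \<Rightarrow> real"
  assumes P_prob: "prob_space P"
    and P_sets: "sets P = sets obsM"
    and Z_nondeg: "0 < measure P {(y, d, z). z}" "measure P {(y, d, z). z} < 1"
    and mu_sets: "sets \<mu> = sets borel"
    and mu_sf: "sigma_finite_measure \<mu>"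
    and f_meas: "\<And>d z. (\<lambda>y. f y d z) \<in> borel_measurable borel"
    and f_nonneg: "\<And>y d z. 0 \<le> f y d z"
    and f_density: "\<And>A d z. A \<in> sets borel \<Longrightarrow>
          ennreal (cprob P A d z) = (\<integral>\<^sup>+ y \<in> A. ennreal (f y d z) \<partial>\<mu>)"
  shows "identified_set_pdf P =
           (if (\<forall>d. (\<integral>\<^sup>+ y. ennreal (max (f y d False) (f y d True)) \<partial>\<mu>) \<le> 1)
            then {lower_pdf P .. upper_pdf P} else {})
         \<and> (identified_set_pdf P \<noteq> {} \<longrightarrow>
              (\<forall>d. (\<integral>\<^sup>+ y. ennreal (max (f y d False) (f y d True)) \<partial>\<mu>) \<le> 1))"
proof -
  interpret S: pdset P \<mu> f
    by (rule pdset.intro[OF P_prob P_sets Z_nondeg mu_sets mu_sf f_meas f_nonneg f_density])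
  have sub1: "identified_set_pdf P \<subseteq> {lower_pdf P .. upper_pdf P}"
  proof
    fix x assume "x \<in> identified_set_pdf P"
    then obtain L where L: "prob_space L" "sets L = sets omegaM" "RA L" "ER L"
        "distr L obsM obs_map = P" and x: "x = p_df L"
      unfolding identified_set_pdf_def by blast
    note nb = nec_bounds[OF L S.Zpos]
    have b1: "\<And>A. A \<in> sets borel \<Longrightarrow> cprob P A True False - cprob P A True True \<le> x"
      using nb(1)[of _ True] x by simp
    have b2: "\<And>A. A \<in> sets borel \<Longrightarrow> cprob P A False True - cprob P A False False \<le> x"
      using nb(1)[of _ False] x by simp
    have x0: "0 \<le> x" unfolding x p_df_def by (rule measure_nonneg)
    have "lower_pdf P \<le> x" by (rule S.lower_le[OF b1 b2 x0])
    moreover have "x \<le> upper_pdf P"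
      using nb(2,3) x unfolding upper_pdf_def cprobD_def by simp
    ultimately show "x \<in> {lower_pdf P .. upper_pdf P}" by simp
  qed
  have sub2: "{lower_pdf P .. upper_pdf P} \<subseteq> identified_set_pdf P"
  proof
    fix x assume x: "x \<in> {lower_pdf P .. upper_pdf P}"
    interpret C: pdcon P \<mu> f x
      by (rule pdcon.intro[OF S.pdset_axioms pdcon_axioms.intro]) (use x in simp_all)
    show "x \<in> identified_set_pdf P" by (rule C.p_mem)
  qed
  have I: "identified_set_pdf P = {lower_pdf P .. upper_pdf P}" using sub1 sub2 by blast
  have c2: "identified_set_pdf P \<noteq> {} \<longrightarrow>
              (\<forall>d. (\<integral>\<^sup>+ y. ennreal (max (f y d False) (f y d True)) \<partial>\<mu>) \<le> 1)"
  proof (intro impI allI)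
    fix d assume ne: "identified_set_pdf P \<noteq> {}"
    show "(\<integral>\<^sup>+ y. ennreal (max (f y d False) (f y d True)) \<partial>\<mu>) \<le> 1"
    proof (rule ccontr)
      assume "\<not> (\<integral>\<^sup>+ y. ennreal (max (f y d False) (f y d True)) \<partial>\<mu>) \<le> 1"
      then have "upper_pdf P < lower_pdf P" by (rule S.cond_fail)
      then show False using ne I by simp
    qed
  qed
  have c1: "identified_set_pdf P =
           (if (\<forall>d. (\<integral>\<^sup>+ y. ennreal (max (f y d False) (f y d True)) \<partial>\<mu>) \<le> 1)
            then {lower_pdf P .. upper_pdf P} else {})"
  proof (cases "\<forall>d. (\<integral>\<^sup>+ y. ennreal (max (f y d False) (f y d True)) \<partial>\<mu>) \<le> 1")
    case True then show ?thesis using I by simp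
  next
    case False
    then obtain d where "\<not> (\<integral>\<^sup>+ y. ennreal (max (f y d False) (f y d True)) \<partial>\<mu>) \<le> 1" by blast
    then have "upper_pdf P < lower_pdf P" by (rule S.cond_fail)
    then show ?thesis using I False by simp
  qed
  show ?thesis using c1 c2 by blast
qed


end
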